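(* In the randomized $\mathsf{No}\text{-}\mathsf{CD}$ model, both of the following tasks can be solved (with high probability) by a randomized algorithm taking $O(\mathcal{C}\log^3 n)$ time and $O(\mathcal{C}\log^3 n)$ energy. Downward transmission: given $i\ge0$ and a subset $V'$ of layer-$i$ vertices holding messages, every layer-$(i+1)$ vertex having at least one $V'$-neighbor in its own cluster receives the message of some such neighbor. Upward transmission: given $i>0$ and a subset $V'$ of layer-$i$ vertices holding messages, every layer-$(i-1)$ vertex having at least one $V'$-neighbor in its own cluster receives the message of some such neighbor.
   Context: Radio network: connected undirected graph $G$ with $n$ vertices and maximum degree $\Delta$; synchronized slots; a vertex transmits, listens or idles per slot, transmit/listen costing one unit of energy. $\mathsf{No}\text{-}\mathsf{CD}$: a listener receives a message iff exactly one neighbor transmits; otherwise silence. A labeling $\mathcal{L}:V\to\{0,\ldots,n-1\}$ is good if every $v$ with $\mathcal{L}(v)>0$ has a neighbor $u$ with $\mathcal{L}(u)=\mathcal{L}(v)-1$; $v$ is a layer-$i$ vertex if $\mathcal{L}(v)=i$. Cluster structure: each vertex $v$ has a unique $\mathrm{ID}(v)$ and a good-labeling value $\mathcal{L}(v)$; the vertices are partitioned into clusters, each cluster $C$ containing exactly one layer-0 vertex $r$ (its center), with every layer-$i$ vertex ($i>0$) of $C$ having a layer-$(i-1)$ neighbor in $C$; each $v\in C$ knows the cluster id $\mathrm{CID}(v)=\mathrm{ID}(r)$ and a shared, sufficiently long random string generated by $r$. All vertices know parameters $\mathcal{C}$ and $\mathcal{D}$ such that for each vertex $u$, the vertices of $N(u)\cup\{u\}$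 belong to at most $\mathcal{C}$ distinct clusters, and $\mathcal{D}$ upper bounds the number of layers. "With high probability" = failure probability $\le1/\mathrm{poly}(n)$. *)

theory Defs
  imports "HOL-Probability.Probability"
begin

text \<open>Vertices of the communication graph are natural numbers (names used only
for the model; algorithms see only their local input). The graph is given by a
vertex set V and an adjacency relation E.\<close>

datatype 'p action = Transmit 'p | Listen | Idle

text \<open>Local input of a vertex: global parameters n, C, D, the layer index i of the
task, its own ID, its label L(v), its cluster id CID(v), and its message
(Some m iff the vertex belongs to V').\<close>
datatype 'm linput = LInput (lin_n: nat) (lin_C: nat) (lin_D: nat) (lin_i: nat)
  (lin_ID: nat) (lin_L: nat) (lin_CID: nat) (lin_msg: "'m option")

text \<open>The number of slots and the length of
the random strings depend only on the global parameters (n, C, D, i). In every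
slot a vertex chooses an action as a function of its local input, its private
random string, the shared random string of its cluster and the history of what it
received so far (None = nothing received: idle, or silence).\<close>
record ('m, 'p) protocol =
  ptime :: "nat \<times> nat \<times> nat \<times> nat \<Rightarrow> nat"
  prand :: "nat \<times> nat \<times> nat \<times> nat \<Rightarrow> nat"
  pact  :: "'m linput \<Rightarrow> bool list \<Rightarrow> bool list \<Rightarrow> 'p option list \<Rightarrow> 'p action"
  pout  :: "'m linput \<Rightarrow> bool list \<Rightarrow> bool list \<Rightarrow> 'p option list \<Rightarrow> 'm option"

text \<open>No-CD reception rule: a listener receives a packet iff exactly one neighbour
transmits; otherwise it hears silence.\<close>
definition transmitters :: "(nat \<Rightarrow> nat \<Rightarrow> bool) \<Rightarrow> nat set \<Rightarrow> (nat \<Rightarrow> 'p action) \<Rightarrow> nat \<Rightarrow> nat set" where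
  "transmitters E V acts v = {u \<in> V. E v u \<and> (\<exists>p. acts u = Transmit p)}"

definition heard :: "(nat \<Rightarrow> nat \<Rightarrow> bool) \<Rightarrow> nat set \<Rightarrow> (nat \<Rightarrow> 'p action) \<Rightarrow> nat \<Rightarrow> 'p option" where
  "heard E V acts v =
     (if acts v = Listen \<and> card (transmitters E V acts v) = 1
      then (case acts (the_elem (transmitters E V acts v)) of Transmit p \<Rightarrow> Some p | _ \<Rightarrow> None)
      else None)"

text \<open>Histories after t slots. inp: local inputs, pr: private random strings,
sh: shared random string available to each vertex (that of its cluster center).\<close>
fun run :: "('m, 'p) protocol \<Rightarrow> (nat \<Rightarrow> nat \<Rightarrow> bool) \<Rightarrow> nat set \<Rightarrow> (nat \<Rightarrow> 'm linput)
            \<Rightarrow> (nat \<Rightarrow> bool list) \<Rightarrow> (nat \<Rightarrow> bool list) \<Rightarrow> nat \<Rightarrow> nat \<Rightarrow> 'p option list" where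
  "run A E V inp pr sh 0 = (\<lambda>v. [])"
| "run A E V inp pr sh (Suc t) =
     (let h = run A E V inp pr sh t;
          acts = (\<lambda>v. pact A (inp v) (pr v) (sh v) (h v))
      in (\<lambda>v. h v @ [heard E V acts v]))"

definition action_at :: "('m, 'p) protocol \<Rightarrow> (nat \<Rightarrow> nat \<Rightarrow> bool) \<Rightarrow> nat set \<Rightarrow> (nat \<Rightarrow> 'm linput)
            \<Rightarrow> (nat \<Rightarrow> bool list) \<Rightarrow> (nat \<Rightarrow> bool list) \<Rightarrow> nat \<Rightarrow> nat \<Rightarrow> 'p action" where
  "action_at A E V inp pr sh t v = pact A (inp v) (pr v) (sh v) (run A E V inp pr sh t v)"

definition energy :: "('m, 'p) protocol \<Rightarrow> (nat \<Rightarrow> nat \<Rightarrow> bool) \<Rightarrow> nat set \<Rightarrow> (nat \<Rightarrow> 'm linput)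
            \<Rightarrow> (nat \<Rightarrow> bool list) \<Rightarrow> (nat \<Rightarrow> bool list) \<Rightarrow> nat \<Rightarrow> nat \<Rightarrow> nat" where
  "energy A E V inp pr sh T v = card {t. t < T \<and> action_at A E V inp pr sh t v \<noteq> Idle}"

definition outputs :: "('m, 'p) protocol \<Rightarrow> (nat \<Rightarrow> nat \<Rightarrow> bool) \<Rightarrow> nat set \<Rightarrow> (nat \<Rightarrow> 'm linput)
            \<Rightarrow> (nat \<Rightarrow> bool list) \<Rightarrow> (nat \<Rightarrow> bool list) \<Rightarrow> nat \<Rightarrow> nat \<Rightarrow> 'm option" where
  "outputs A E V inp pr sh T v = pout A (inp v) (pr v) (sh v) (run A E V inp pr sh T v)"

definition cluster_instance :: "nat \<Rightarrow> nat \<Rightarrow> nat \<Rightarrow> nat \<Rightarrow> (nat \<Rightarrow> nat \<Rightarrow> bool) \<Rightarrow> nat set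
      \<Rightarrow> (nat \<Rightarrow> nat) \<Rightarrow> (nat \<Rightarrow> nat) \<Rightarrow> (nat \<Rightarrow> nat) \<Rightarrow> bool" where
  "cluster_instance n a C D E V ID L ctr \<longleftrightarrow>
     finite V \<and> card V = n \<and>
     (\<forall>u v. E u v \<longrightarrow> u \<in> V \<and> v \<in> V) \<and> (\<forall>u v. E u v \<longrightarrow> E v u) \<and> (\<forall>v. \<not> E v v) \<and>
     (\<forall>u\<in>V. \<forall>v\<in>V. E\<^sup>*\<^sup>* u v) \<and>
     inj_on ID V \<and> (\<forall>v\<in>V. ID v < n ^ a) \<and>
     (\<forall>v\<in>V. L v < n) \<and>
     (\<forall>v\<in>V. 0 < L v \<longrightarrow> (\<exists>u. E v u \<and> L u = L v - 1)) \<and>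
     (\<forall>v\<in>V. ctr v \<in> V \<and> ctr (ctr v) = ctr v \<and> L (ctr v) = 0) \<and>
     (\<forall>v\<in>V. L v = 0 \<longrightarrow> ctr v = v) \<and>
     (\<forall>v\<in>V. 0 < L v \<longrightarrow> (\<exists>u. E v u \<and> ctr u = ctr v \<and> L u = L v - 1)) \<and>
     (\<forall>u\<in>V. card (ctr ` ({u} \<union> {v. E u v})) \<le> C) \<and>
     (\<forall>v\<in>V. L v < D)"

datatype direction = Downward | Upward

definition is_target :: "direction \<Rightarrow> nat \<Rightarrow> nat \<Rightarrow> bool" where
  "is_target d i l = (case d of Downward \<Rightarrow> l = i + 1 | Upward \<Rightarrow> l + 1 = i)"

definition task_ok :: "direction \<Rightarrow> nat \<Rightarrow> (nat \<Rightarrow> nat \<Rightarrow> bool) \<Rightarrow> nat set \<Rightarrow> (nat \<Rightarrow> nat)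
      \<Rightarrow> (nat \<Rightarrow> nat) \<Rightarrow> nat set \<Rightarrow> (nat \<Rightarrow> 'm) \<Rightarrow> (nat \<Rightarrow> 'm option) \<Rightarrow> bool" where
  "task_ok d i E V L ctr V' msg out \<longleftrightarrow>
     (\<forall>w\<in>V. is_target d i (L w) \<and> (\<exists>u\<in>V'. E u w \<and> ctr u = ctr w) \<longrightarrow>
        (\<exists>u\<in>V'. E u w \<and> ctr u = ctr w \<and> out w = Some (msg u)))"

end

theory Submission
  imports Defs "HOL-Library.Discrete_Functions"
begin


definition allT :: "bool list \<Rightarrow> bool" where "allT xs = (\<forall>x\<in>set xs. x)"

definition Lb :: "nat \<Rightarrow> bool list set" where "Lb b = {bs. length bs = b}"

definition Pre :: "nat \<Rightarrow> nat \<Rightarrow> bool list set" where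
  "Pre b q = {bs. length bs = b \<and> allT (take q bs)}"

lemma finite_Lb[simp]: "finite (Lb b)"
proof -
  have "Lb b = {xs. set xs \<subseteq> (UNIV::bool set) \<and> length xs = b}" by (auto simp: Lb_def)
  thus ?thesis using finite_lists_length_eq[of "UNIV::bool set" b] by simp
qed

lemma card_Lb[simp]: "card (Lb b) = 2 ^ b"
proof -
  have "Lb b = {xs. set xs \<subseteq> (UNIV::bool set) \<and> length xs = b}" by (auto simp: Lb_def)
  thus ?thesis using card_lists_length_eq[of "UNIV::bool set" b] by simp
qed

lemma Pre_sub: "Pre b q \<subseteq> Lb b" by (auto simp: Pre_def Lb_def)

lemma card_Pre: assumes "q \<le> b" shows "card (Pre b q) = 2 ^ (b - q)"
proof -
  have "Pre b q = (\<lambda>ys. replicate q True @ ys) ` Lb (b - q)"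
  proof (rule set_eqI, rule iffI)
    fix x assume "x \<in> Pre b q"
    hence x: "length x = b" "allT (take q x)" by (auto simp: Pre_def)
    have "take q x = replicate q True"
      by (rule replicate_eqI) (use x assms in \<open>auto simp: allT_def\<close>)
    hence "x = replicate q True @ drop q x" by (metis append_take_drop_id)
    thus "x \<in> (\<lambda>ys. replicate q True @ ys) ` Lb (b - q)" using x by (auto simp: Lb_def)
  next
    fix x assume "x \<in> (\<lambda>ys. replicate q True @ ys) ` Lb (b - q)"
    thus "x \<in> Pre b q" using assms by (auto simp: Pre_def Lb_def allT_def)
  qed
  moreover have "inj (\<lambda>ys. replicate q True @ ys)" by (auto simp: inj_def)
  ultimately show ?thesis by (simp add: card_image inj_on_def)
qed

lemma card_Lb_Pre: assumes "q \<le> b" shows "card (Lb b - Pre b q) = 2 ^ b - 2 ^ (b - q)"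
  using card_Pre[OF assms] Pre_sub[of b q] by (simp add: card_Diff_subset finite_subset)



definition Lv :: "nat \<Rightarrow> nat" where "Lv n = floor_log n + 3"
definition qC :: "nat \<Rightarrow> nat" where "qC C = floor_log C + 2"
definition bb :: "nat \<Rightarrow> nat \<Rightarrow> nat" where "bb n C = Lv n + qC C"

lemma prod_if_const: "finite V \<Longrightarrow> A \<subseteq> V \<Longrightarrow> (\<Prod>v\<in>V. if v \<in> A then (y::real) else 1) = y ^ card A"
proof -
  assume f: "finite V" and s: "A \<subseteq> V"
  have "(\<Prod>v\<in>V. if v \<in> A then y else 1) = (\<Prod>v\<in>A. if v \<in> A then y else 1)"
    using f s by (intro prod.mono_neutral_right) auto
  thus ?thesis by simp
qed

lemma card_PiE_ratio:
  assumes "finite V" "\<And>v. v \<in> V \<Longrightarrow> real (card (F v)) = 2 ^ b * r v"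
  shows "real (card (PiE V F)) = (2 ^ b) ^ card V * prod r V"
proof -
  have "real (card (PiE V F)) = (\<Prod>v\<in>V. real (card (F v)))"
    using assms(1) by (simp add: card_PiE)
  also have "\<dots> = (\<Prod>v\<in>V. 2 ^ b * r v)" using assms(2) by (rule prod.cong[OF refl])
  also have "\<dots> = (2 ^ b) ^ card V * prod r V" by (simp add: prod.distrib)
  finally show ?thesis .
qed

lemma real_card_Pre: "q \<le> b \<Longrightarrow> real (card (Pre b q)) = 2 ^ b * (1 / 2 ^ q)"
proof -
  assume q: "q \<le> b"
  have "(2::real) ^ (b - q) = 2 ^ b / 2 ^ q" using q by (intro power_diff) auto
  thus ?thesis using q by (simp add: card_Pre)
qed

lemma real_card_nPre: "q \<le> b \<Longrightarrow> real (card (Lb b - Pre b q)) = 2 ^ b * (1 - 1 / 2 ^ q)"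
proof -
  assume q: "q \<le> b"
  have le: "(2::nat) ^ (b - q) \<le> 2 ^ b" by (simp add: power_increasing)
  have "real (card (Lb b - Pre b q)) = 2 ^ b - 2 ^ (b - q)"
    using card_Lb_Pre[OF q] le by (simp add: of_nat_diff)
  also have "\<dots> = 2 ^ b * (1 - 1 / 2 ^ q)" using q by (simp add: power_diff algebra_simps)
  finally show ?thesis .
qed

locale blk =
  fixes n C :: nat and E :: "nat \<Rightarrow> nat \<Rightarrow> bool" and V V' :: "nat set" and ctr :: "nat \<Rightarrow> nat"
  assumes finV: "finite V" and cardV: "card V = n"
    and Ein: "\<And>u v. E u v \<Longrightarrow> u \<in> V \<and> v \<in> V" and Esym: "\<And>u v. E u v \<Longrightarrow> E v u"
    and ctrV: "\<And>v. v \<in> V \<Longrightarrow> ctr v \<in> V"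
    and Cbound: "\<And>u. u \<in> V \<Longrightarrow> card (ctr ` ({u} \<union> {v. E u v})) \<le> C"
    and V'V: "V' \<subseteq> V"
begin

abbreviation "b \<equiv> bb n C"
abbreviation "q \<equiv> qC C"

definition Block :: "((nat \<Rightarrow> bool list) \<times> (nat \<Rightarrow> bool list)) set" where
  "Block = PiE V (\<lambda>_. Lb b) \<times> PiE V (\<lambda>_. Lb b)"

definition txB :: "nat \<Rightarrow> (nat \<Rightarrow> bool list) \<times> (nat \<Rightarrow> bool list) \<Rightarrow> nat \<Rightarrow> bool" where
  "txB t B v = (v \<in> V' \<and> allT (take q (snd B (ctr v))) \<and> allT (take (t mod Lv n) (fst B v)))"

definition S0 :: "nat \<Rightarrow> nat set" where "S0 w = {u \<in> V'. E u w \<and> ctr u = ctr w}"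

definition Succ :: "nat \<Rightarrow> nat \<Rightarrow> ((nat \<Rightarrow> bool list) \<times> (nat \<Rightarrow> bool list)) set" where
  "Succ w t = {B \<in> Block. \<exists>u\<in>S0 w. {v \<in> V. E w v \<and> txB t B v} = {u}}"

lemma finite_Block: "finite Block"
  unfolding Block_def using finV by (intro finite_cartesian_product finite_PiE) auto

lemma card_Block: "real (card Block) = (2 ^ b) ^ card V * (2 ^ b) ^ card V"
  unfolding Block_def using finV by (simp add: card_cartesian_product card_PiE)

lemma Cpos: "V \<noteq> {} \<Longrightarrow> 0 < C"
proof -
  assume "V \<noteq> {}" then obtain u where u: "u \<in> V" by auto
  have "finite (ctr ` ({u} \<union> {v. E u v}))"
    using Ein by (intro finite_imageI) (auto intro: finite_subset[OF _ finV])
  hence "card (ctr ` ({u} \<union> {v. E u v})) > 0" by (auto simp: card_gt_0_iff)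
  thus ?thesis using Cbound[OF u] by linarith
qed

end


context blk begin

lemma Succ_card:
  assumes w: "w \<in> V" and ne: "S0 w \<noteq> {}" and tj: "t mod Lv n = floor_log (card (S0 w)) + 2"
  shows "real (card (Succ w t)) \<ge> real (card Block) / (64 * C)"
proof -
  define s where "s = card (S0 w)"
  define j where "j = floor_log s + 2"
  have S0V: "S0 w \<subseteq> V" using V'V by (auto simp: S0_def)
  have fS0: "finite (S0 w)" using S0V finV finite_subset by blast
  have spos: "s > 0" using ne fS0 by (simp add: s_def card_gt_0_iff)
  have sn: "s \<le> n" using card_mono[OF finV S0V] cardV by (simp add: s_def)
  have jL: "j < Lv n" using floor_log_le_iff[OF sn] by (simp add: j_def Lv_def)
  have jb: "j \<le> b" using jL by (simp add: bb_def)
  have qb: "q \<le> b" by (simp add: bb_def)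
  have tmod: "t mod Lv n = j" using tj by (simp add: j_def s_def)
  define OC where "OC = ctr ` {v \<in> V'. E w v} - {ctr w}"
  define m where "m = card OC"
  have OCV: "OC \<subseteq> V" using ctrV V'V by (auto simp: OC_def)
  have fOC: "finite OC" using OCV finV finite_subset by blast
  have "OC \<subseteq> ctr ` ({w} \<union> {v. E w v})" by (auto simp: OC_def)
  moreover have "finite (ctr ` ({w} \<union> {v. E w v}))"
    using Ein by (intro finite_imageI) (auto intro: finite_subset[OF _ finV])
  ultimately have "m \<le> card (ctr ` ({w} \<union> {v. E w v}))" unfolding m_def by (rule card_mono[rotated])
  hence mC: "m \<le> C" using Cbound[OF w] by linarith
  have Cpos': "C > 0" using Cpos w by auto
  define Pu where "Pu u v = (if v = u then Pre b j else if v \<in> S0 w then Lb b - Pre b j else Lb b)" for u v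
  define Sw where "Sw c = (if c = ctr w then Pre b q else if c \<in> OC then Lb b - Pre b q else Lb b)" for c
  define Eu where "Eu u = PiE V (Pu u) \<times> PiE V Sw" for u
  have sub: "Eu u \<subseteq> Succ w t" if u: "u \<in> S0 w" for u
  proof
    fix B assume B: "B \<in> Eu u"
    obtain P S where PS: "B = (P, S)" by (cases B)
    have P: "P \<in> PiE V (Pu u)" and S: "S \<in> PiE V Sw" using B PS by (auto simp: Eu_def)
    have "Pu u v \<subseteq> Lb b" for v using Pre_sub by (auto simp: Pu_def)
    hence P': "P \<in> PiE V (\<lambda>_. Lb b)" using P PiE_mono by blast
    have "Sw c \<subseteq> Lb b" for c using Pre_sub by (auto simp: Sw_def)
    hence S': "S \<in> PiE V (\<lambda>_. Lb b)" using S PiE_mono by blast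
    have inB: "B \<in> Block" using P' S' PS by (simp add: Block_def)
    have uV': "u \<in> V'" and Euw: "E u w" and cu: "ctr u = ctr w" using u by (auto simp: S0_def)
    have uV: "u \<in> V" using uV' V'V by auto
    have Su: "S (ctr u) \<in> Pre b q" using S ctrV[OF w] cu by (auto simp: Sw_def PiE_def Pi_def)
    have Pu': "P u \<in> Pre b j" using P uV by (auto simp: Pu_def PiE_def Pi_def)
    have txu: "txB t B u" using uV' Su Pu' tmod PS by (simp add: txB_def Pre_def)
    have other: "v = u" if v: "v \<in> V" "E w v" "txB t B v" for v
    proof (rule ccontr)
      assume vu: "v \<noteq> u"
      have vV': "v \<in> V'" and a1: "allT (take q (S (ctr v)))" and a2: "allT (take j (P v))"
        using v PS tmod by (auto simp: txB_def)
      show False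
      proof (cases "ctr v = ctr w")
        case True
        hence "v \<in> S0 w" using vV' Esym[OF v(2)] by (simp add: S0_def)
        hence "P v \<in> Lb b - Pre b j" using P v(1) vu by (auto simp: Pu_def PiE_def Pi_def)
        thus False using a2 by (simp add: Pre_def Lb_def)
      next
        case False
        hence "ctr v \<in> OC" using vV' v(2) by (auto simp: OC_def)
        hence "S (ctr v) \<in> Lb b - Pre b q" using S ctrV[OF v(1)] False by (auto simp: Sw_def PiE_def Pi_def)
        thus False using a1 by (simp add: Pre_def Lb_def)
      qed
    qed
    have s1: "{v \<in> V. E w v \<and> txB t B v} \<subseteq> {u}" using other by blast
    have s2: "u \<in> {v \<in> V. E w v \<and> txB t B v}" using txu uV Esym[OF Euw] by blast
    have "{v \<in> V. E w v \<and> txB t B v} = {u}" using s1 s2 by blast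
    thus "B \<in> Succ w t" using inB u by (auto simp: Succ_def)
  qed
  have disj: "disjoint_family_on Eu (S0 w)"
  proof (unfold disjoint_family_on_def, intro ballI impI)
    fix u1 u2 assume u1: "u1 \<in> S0 w" and u2: "u2 \<in> S0 w" and ne: "u1 \<noteq> u2"
    show "Eu u1 \<inter> Eu u2 = {}"
    proof (rule ccontr)
      assume "Eu u1 \<inter> Eu u2 \<noteq> {}"
      then obtain P S where "(P, S) \<in> Eu u1" "(P, S) \<in> Eu u2" by auto
      hence "P \<in> PiE V (Pu u1)" "P \<in> PiE V (Pu u2)" by (auto simp: Eu_def)
      moreover have "u1 \<in> V" using u1 S0V by auto
      ultimately have "P u1 \<in> Pre b j" "P u1 \<in> Lb b - Pre b j"
        using u1 ne by (auto simp: Pu_def PiE_def Pi_def)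
      thus False by auto
    qed
  qed
  define x :: real where "x = 1 / 2 ^ j"
  define y :: real where "y = 1 - 1 / 2 ^ j"
  define x' :: real where "x' = 1 / 2 ^ q"
  define y' :: real where "y' = 1 - 1 / 2 ^ q"
  have cardEu: "real (card (Eu u)) = real (card Block) * ((x * y ^ (s - 1)) * (x' * y' ^ m))"
    if u: "u \<in> S0 w" for u
  proof -
    have uV: "u \<in> V" using u S0V by auto
    have c1: "real (card (PiE V (Pu u))) = (2 ^ b) ^ card V *
        (\<Prod>v\<in>V. (if v \<in> {u} then x else 1) * (if v \<in> S0 w - {u} then y else 1))"
    proof (rule card_PiE_ratio[OF finV])
      fix v assume "v \<in> V"
      show "real (card (Pu u v)) = 2 ^ b * ((if v \<in> {u} then x else 1) * (if v \<in> S0 w - {u} then y else 1))"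
        by (cases "v = u"; cases "v \<in> S0 w")
           (simp_all add: Pu_def real_card_Pre[OF jb] real_card_nPre[OF jb] x_def y_def)
    qed
    have p1: "(\<Prod>v\<in>V. (if v \<in> {u} then x else 1) * (if v \<in> S0 w - {u} then y else 1))
        = x * y ^ (s - 1)"
    proof -
      have "(\<Prod>v\<in>V. (if v \<in> {u} then x else 1) * (if v \<in> S0 w - {u} then y else 1))
        = (\<Prod>v\<in>V. if v \<in> {u} then x else 1) * (\<Prod>v\<in>V. if v \<in> S0 w - {u} then y else 1)"
        by (rule prod.distrib)
      also have "\<dots> = x ^ card {u} * y ^ card (S0 w - {u})"
        using prod_if_const[OF finV, of "{u}" x] prod_if_const[OF finV, of "S0 w - {u}" y] uV S0V by auto
      also have "\<dots> = x * y ^ (s - 1)" using u fS0 by (simp add: s_def)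
      finally show ?thesis .
    qed
    have c2: "real (card (PiE V Sw)) = (2 ^ b) ^ card V *
        (\<Prod>c\<in>V. (if c \<in> {ctr w} then x' else 1) * (if c \<in> OC then y' else 1))"
    proof (rule card_PiE_ratio[OF finV])
      fix c assume "c \<in> V"
      have nO: "ctr w \<notin> OC" by (simp add: OC_def)
      show "real (card (Sw c)) = 2 ^ b * ((if c \<in> {ctr w} then x' else 1) * (if c \<in> OC then y' else 1))"
        using nO by (cases "c = ctr w"; cases "c \<in> OC")
           (simp_all add: Sw_def real_card_Pre[OF qb] real_card_nPre[OF qb] x'_def y'_def)
    qed
    have p2: "(\<Prod>c\<in>V. (if c \<in> {ctr w} then x' else 1) * (if c \<in> OC then y' else 1))
        = x' * y' ^ m"
    proof -
      have "(\<Prod>c\<in>V. (if c \<in> {ctr w} then x' else 1) * (if c \<in> OC then y' else 1))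
        = (\<Prod>c\<in>V. if c \<in> {ctr w} then x' else 1) * (\<Prod>c\<in>V. if c \<in> OC then y' else 1)"
        by (rule prod.distrib)
      also have "\<dots> = x' ^ card {ctr w} * y' ^ card OC"
        using prod_if_const[OF finV, of "{ctr w}" x'] prod_if_const[OF finV, of OC y'] ctrV[OF w] OCV by auto
      also have "\<dots> = x' * y' ^ m" by (simp add: m_def)
      finally show ?thesis .
    qed
    show ?thesis unfolding Eu_def card_cartesian_product of_nat_mult c1 c2 p1 p2 card_Block
      by (simp add: algebra_simps)
  qed
  have "real (card (\<Union>u\<in>S0 w. Eu u)) = (\<Sum>u\<in>S0 w. real (card (Eu u)))"
  proof -
    have "finite (Eu u)" for u unfolding Eu_def using finV
      by (intro finite_cartesian_product finite_PiE) (auto simp: Pu_def Sw_def intro: finite_subset[OF Pre_sub])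
    hence "card (\<Union>u\<in>S0 w. Eu u) = (\<Sum>u\<in>S0 w. card (Eu u))"
      using fS0 disj by (intro card_UN_disjoint) (auto simp: disjoint_family_on_def)
    thus ?thesis by simp
  qed
  also have "\<dots> = real s * (real (card Block) * ((x * y ^ (s - 1)) * (x' * y' ^ m)))"
    using cardEu by (simp add: s_def)
  finally have cU: "real (card (\<Union>u\<in>S0 w. Eu u)) = real (card Block) * ((real s * x) * y ^ (s - 1) * x' * y' ^ m)"
    by (simp add: algebra_simps)
  have "card (\<Union>u\<in>S0 w. Eu u) \<le> card (Succ w t)"
    using sub finite_Block by (intro card_mono) (auto simp: Succ_def intro: finite_subset)
  hence key: "real (card Block) * ((real s * x) * y ^ (s - 1) * x' * y' ^ m) \<le> real (card (Succ w t))"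
    using cU by linarith
  have e1: "2 ^ floor_log s \<le> s" using floor_log_exp2_le[OF spos] .
  have e2: "s < 2 * 2 ^ floor_log s" using floor_log_exp2_gt[of s] .
  have e3: "2 ^ floor_log C \<le> C" using floor_log_exp2_le[OF Cpos'] .
  have e4: "C < 2 * 2 ^ floor_log C" using floor_log_exp2_gt[of C] .
  have pj: "(2::real) ^ j = 4 * 2 ^ floor_log s" by (simp add: j_def power_add)
  have pq: "(2::real) ^ q = 4 * 2 ^ floor_log C" by (simp add: qC_def power_add)
  have rs1: "real s * x \<ge> 1 / 4"
  proof -
    have "(2::real) ^ floor_log s \<le> real s" using of_nat_le_iff[where 'a=real, THEN iffD2, OF e1] by simp
    hence "(2::real) ^ j \<le> 4 * real s" using pj by linarith
    thus ?thesis by (simp add: x_def field_simps)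
  qed
  have rs2: "y ^ (s - 1) \<ge> 1 / 2"
  proof -
    have s2: "2 * real s \<le> 2 ^ j"
    proof -
      have "real s \<le> 2 * 2 ^ floor_log s" using of_nat_le_iff[where 'a=real, THEN iffD2, OF less_imp_le[OF e2]] by simp
      thus ?thesis using pj by simp
    qed
    have pos: "(0::real) < 2 ^ j" by simp
    have "-1 \<le> - 1 / (2::real) ^ j" by (simp add: field_simps)
    from Bernoulli_inequality[OF this, of "s - 1"]
    have "1 - real (s - 1) * (1 / 2 ^ j) \<le> y ^ (s - 1)" by (simp add: y_def)
    moreover have "real (s - 1) * (1 / 2 ^ j) \<le> 1 / 2"
    proof -
      have "2 * real (s - 1) \<le> 2 ^ j" using s2 spos by (simp add: of_nat_diff)
      thus ?thesis using pos by (simp add: field_simps)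
    qed
    ultimately show ?thesis by linarith
  qed
  have rs3: "x' \<ge> 1 / (4 * real C)"
  proof -
    have "(2::real) ^ floor_log C \<le> real C" using of_nat_le_iff[where 'a=real, THEN iffD2, OF e3] by simp
    hence "(2::real) ^ q \<le> 4 * real C" using pq by linarith
    thus ?thesis using Cpos' by (simp add: x'_def field_simps)
  qed
  have rs4: "y' ^ m \<ge> 1 / 2"
  proof -
    have s2: "2 * real C \<le> 2 ^ q"
    proof -
      have "real C \<le> 2 * 2 ^ floor_log C" using of_nat_le_iff[where 'a=real, THEN iffD2, OF less_imp_le[OF e4]] by simp
      thus ?thesis using pq by simp
    qed
    have pos: "(0::real) < 2 ^ q" by simp
    have "-1 \<le> - 1 / (2::real) ^ q" by (simp add: field_simps)
    from Bernoulli_inequality[OF this, of "m"]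
    have "1 - real m * (1 / 2 ^ q) \<le> y' ^ m" by (simp add: y'_def)
    moreover have "real m * (1 / 2 ^ q) \<le> 1 / 2"
    proof -
      have "real m \<le> real C" using mC by simp
      hence "2 * real m \<le> 2 ^ q" using s2 by linarith
      thus ?thesis using pos by (simp add: field_simps)
    qed
    ultimately show ?thesis by linarith
  qed
  have "1 / (64 * real C) \<le> (real s * x) * y ^ (s - 1) * x' * y' ^ m"
  proof -
    have "1 / (64 * real C) = (1/4) * (1/2) * (1 / (4 * real C)) * (1/2)" by simp
    also have "\<dots> \<le> (real s * x) * y ^ (s - 1) * x' * y' ^ m"
    proof -
      have n1: "0 \<le> real s * x" using rs1 by linarith
      have n2: "0 \<le> y ^ (s - 1)" using rs2 by linarith
      have n3: "0 \<le> x'" by (simp add: x'_def)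
      have n12: "0 \<le> real s * x * y ^ (s - 1)" using n1 n2 by simp
      have n123: "0 \<le> real s * x * y ^ (s - 1) * x'" using n12 n3 by simp
      show ?thesis using rs1 rs2 rs3 rs4 n1 n2 n3 n12 n123
        by (intro mult_mono) auto
    qed
    finally show ?thesis .
  qed
  hence "real (card Block) * (1 / (64 * real C)) \<le> real (card Block) * ((real s * x) * y ^ (s - 1) * x' * y' ^ m)"
    by (intro mult_left_mono) auto
  hence "real (card Block) * (1 / (64 * real C)) \<le> real (card (Succ w t))"
    using key by linarith
  thus ?thesis by simp
qed

end


definition chunk :: "nat \<Rightarrow> nat \<Rightarrow> bool list \<Rightarrow> bool list" where
  "chunk b t bs = take b (drop (t * b) bs)"

definition act :: "'m linput \<Rightarrow> bool list \<Rightarrow> bool list \<Rightarrow> nat \<Rightarrow> ('m option \<times> nat list) action" where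
  "act inp pr sh t = (case lin_msg inp of None \<Rightarrow> Listen | Some m \<Rightarrow>
     (if allT (take (qC (lin_C inp)) (chunk (bb (lin_n inp) (lin_C inp)) t sh)) \<and>
         allT (take (t mod Lv (lin_n inp)) (chunk (bb (lin_n inp) (lin_C inp)) t pr))
      then Transmit (Some m, [lin_CID inp]) else Idle))"

definition isgood :: "nat \<Rightarrow> ('m option \<times> nat list) option \<Rightarrow> bool" where
  "isgood c x = (\<exists>m. x = Some (Some m, [c]))"

definition outf :: "'m linput \<Rightarrow> ('m option \<times> nat list) option list \<Rightarrow> 'm option" where
  "outf inp h = (case filter (isgood (lin_CID inp)) h of [] \<Rightarrow> None
     | x # _ \<Rightarrow> (case x of Some (Some m, _) \<Rightarrow> Some m | _ \<Rightarrow> None))"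

definition PP :: "nat \<Rightarrow> nat \<Rightarrow> nat \<Rightarrow> nat" where "PP k n C = 64 * C * (k + 1) * (floor_log n + 1)"
definition TT :: "nat \<Rightarrow> nat \<Rightarrow> nat \<Rightarrow> nat" where "TT k n C = PP k n C * Lv n"

definition Alg :: "nat \<Rightarrow> ('m, 'm option \<times> nat list) protocol" where
  "Alg k = \<lparr> ptime = (\<lambda>(n, C, D, i). TT k n C), prand = (\<lambda>(n, C, D, i). TT k n C * bb n C),
             pact = (\<lambda>inp pr sh h. act inp pr sh (length h)), pout = (\<lambda>inp pr sh h. outf inp h) \<rparr>"

lemma run_Alg: "run (Alg k) E V inp pr sh t =
   (\<lambda>v. map (\<lambda>s. heard E V (\<lambda>u. act (inp u) (pr u) (sh u) s) v) [0..<t])"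
proof (induction t)
  case 0
  show ?case by simp
next
  case (Suc t)
  have acts: "(\<lambda>v. pact (Alg k) (inp v) (pr v) (sh v) (run (Alg k) E V inp pr sh t v)) =
      (\<lambda>u. act (inp u) (pr u) (sh u) t)"
    apply (rule ext)
    apply (simp only: Suc.IH length_map length_upt)
    apply (simp add: Alg_def)
    done
  show ?case
    unfolding run.simps Let_def acts by (rule ext) (simp add: Suc.IH)
qed

lemma action_at_Alg: "action_at (Alg k) E V inp pr sh t v = act (inp v) (pr v) (sh v) t"
  unfolding action_at_def run_Alg by (simp add: Alg_def)

lemma outputs_Alg: "outputs (Alg k) E V inp pr sh T v =
   outf (inp v) (map (\<lambda>s. heard E V (\<lambda>u. act (inp u) (pr u) (sh u) s) v) [0..<T])"
  unfolding outputs_def run_Alg by (simp add: Alg_def)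

lemma energy_le: "energy A E V inp pr sh T v \<le> T"
proof -
  have "{t. t < T \<and> action_at A E V inp pr sh t v \<noteq> Idle} \<subseteq> {..<T}" by auto
  hence "card {t. t < T \<and> action_at A E V inp pr sh t v \<noteq> Idle} \<le> card {..<T}"
    by (intro card_mono) auto
  thus ?thesis unfolding energy_def by simp
qed

lemma length_chunk: "length xs = T * b \<Longrightarrow> t < T \<Longrightarrow> length (chunk b t xs) = b"
proof -
  assume l: "length xs = T * b" and t: "t < T"
  have "Suc t * b \<le> T * b" using t by (intro mult_le_mono1) simp
  thus ?thesis using l by (simp add: chunk_def)
qed

lemma chunk_eq:
  assumes "length xs = T * b" "length ys = T * b" "\<And>t. t < T \<Longrightarrow> chunk b t xs = chunk b t ys"
  shows "xs = ys"
proof (rule nth_equalityI)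
  show "length xs = length ys" using assms by simp
  fix i assume i: "i < length xs"
  hence bpos: "b > 0" using assms(1) by (cases b) auto
  define t r where "t = i div b" and "r = i mod b"
  have ir: "i = t * b + r" by (simp add: t_def r_def)
  have rb: "r < b" using bpos by (simp add: r_def)
  have tT: "t < T" using i assms(1) bpos by (simp add: t_def div_less_iff_less_mult)
  have "xs ! i = chunk b t xs ! r" using ir rb i by (simp add: chunk_def)
  also have "\<dots> = chunk b t ys ! r" using assms(3)[OF tT] by simp
  also have "\<dots> = ys ! i"
  proof -
    have "t * b \<le> length ys" using ir i assms(1,2) by linarith
    thus ?thesis using ir rb i assms(1,2) by (simp add: chunk_def nth_drop)
  qed
  finally show "xs ! i = ys ! i" .
qed

context blk begin

definition Om :: "nat \<Rightarrow> ((nat \<Rightarrow> bool list) \<times> (nat \<Rightarrow> bool list)) set" where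
  "Om T = PiE V (\<lambda>_. Lb (T * b)) \<times> PiE V (\<lambda>_. Lb (T * b))"

definition beta :: "nat \<Rightarrow> (nat \<Rightarrow> bool list) \<times> (nat \<Rightarrow> bool list) \<Rightarrow> nat \<Rightarrow> (nat \<Rightarrow> bool list) \<times> (nat \<Rightarrow> bool list)" where
  "beta T \<omega> = (\<lambda>t\<in>{..<T}. ((\<lambda>v\<in>V. chunk b t (fst \<omega> v)), (\<lambda>v\<in>V. chunk b t (snd \<omega> v))))"

lemma finite_Om: "finite (Om T)"
  unfolding Om_def using finV by (intro finite_cartesian_product finite_PiE) auto

lemma card_Om: "card (Om T) = card Block ^ T"
proof -
  have "card (Om T) = ((2 ^ (T * b)) ^ card V) * ((2 ^ (T * b)) ^ card V)"
    unfolding Om_def by (simp only: card_cartesian_product card_PiE[OF finV] card_Lb prod_constant)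
  also have "\<dots> = (((2 ^ b) ^ card V) * ((2 ^ b) ^ card V)) ^ T"
  proof -
    have "((2::nat) ^ (T * b)) ^ card V = ((2 ^ b) ^ card V) ^ T"
      by (simp only: power_mult[symmetric]) (simp add: mult_ac)
    thus ?thesis by (simp add: power_mult_distrib)
  qed
  also have "\<dots> = card Block ^ T"
    unfolding Block_def by (simp only: card_cartesian_product card_PiE[OF finV] card_Lb prod_constant)
  finally show ?thesis .
qed

lemma beta_in:
  assumes o: "\<omega> \<in> Om T" shows "beta T \<omega> \<in> PiE {..<T} (\<lambda>_. Block)"
  unfolding beta_def
proof (rule restrict_PiE_iff[THEN iffD2], rule ballI)
  fix t assume "t \<in> {..<T}"
  hence t: "t < T" by simp
  have l1: "length (fst \<omega> v) = T * b" and l2: "length (snd \<omega> v) = T * b" if "v \<in> V" for v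
    using o that by (auto simp: Om_def Lb_def PiE_iff)
  have "(\<lambda>v\<in>V. chunk b t (fst \<omega> v)) \<in> PiE V (\<lambda>_. Lb b)"
    by (rule restrict_PiE_iff[THEN iffD2]) (simp add: Lb_def length_chunk[OF l1 t])
  moreover have "(\<lambda>v\<in>V. chunk b t (snd \<omega> v)) \<in> PiE V (\<lambda>_. Lb b)"
    by (rule restrict_PiE_iff[THEN iffD2]) (simp add: Lb_def length_chunk[OF l2 t])
  ultimately show "((\<lambda>v\<in>V. chunk b t (fst \<omega> v)), (\<lambda>v\<in>V. chunk b t (snd \<omega> v))) \<in> Block"
    by (simp add: Block_def)
qed

lemma inj_beta: "inj_on (beta T) (Om T)"
proof (rule inj_onI)
  fix \<omega>1 \<omega>2 assume o1: "\<omega>1 \<in> Om T" and o2: "\<omega>2 \<in> Om T" and eq: "beta T \<omega>1 = beta T \<omega>2"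
  have ch: "chunk b t (fst \<omega>1 v) = chunk b t (fst \<omega>2 v) \<and> chunk b t (snd \<omega>1 v) = chunk b t (snd \<omega>2 v)"
    if "t < T" "v \<in> V" for t v
  proof -
    have "beta T \<omega>1 t = beta T \<omega>2 t" using eq by simp
    hence "(\<lambda>v\<in>V. chunk b t (fst \<omega>1 v)) = (\<lambda>v\<in>V. chunk b t (fst \<omega>2 v)) \<and>
           (\<lambda>v\<in>V. chunk b t (snd \<omega>1 v)) = (\<lambda>v\<in>V. chunk b t (snd \<omega>2 v))"
      using that(1) by (simp add: beta_def)
    hence "(\<lambda>v\<in>V. chunk b t (fst \<omega>1 v)) v = (\<lambda>v\<in>V. chunk b t (fst \<omega>2 v)) v \<and>
           (\<lambda>v\<in>V. chunk b t (snd \<omega>1 v)) v = (\<lambda>v\<in>V. chunk b t (snd \<omega>2 v)) v" by simp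
    thus ?thesis using that(2) by simp
  qed
  have l: "length (fst \<omega>1 v) = T * b" "length (fst \<omega>2 v) = T * b"
     "length (snd \<omega>1 v) = T * b" "length (snd \<omega>2 v) = T * b" if "v \<in> V" for v
    using o1 o2 that by (auto simp: Om_def Lb_def PiE_iff)
  have f: "fst \<omega>1 v = fst \<omega>2 v" if "v \<in> V" for v
    by (rule chunk_eq[OF l(1)[OF that] l(2)[OF that]]) (use ch that in blast)
  have g: "snd \<omega>1 v = snd \<omega>2 v" if "v \<in> V" for v
    by (rule chunk_eq[OF l(3)[OF that] l(4)[OF that]]) (use ch that in blast)
  have m: "fst \<omega>1 \<in> PiE V (\<lambda>_. Lb (T * b))" "fst \<omega>2 \<in> PiE V (\<lambda>_. Lb (T * b))"
     "snd \<omega>1 \<in> PiE V (\<lambda>_. Lb (T * b))" "snd \<omega>2 \<in> PiE V (\<lambda>_. Lb (T * b))"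
    using o1 o2 by (auto simp: Om_def)
  have "fst \<omega>1 = fst \<omega>2" using PiE_ext[OF m(1) m(2)] f by blast
  moreover have "snd \<omega>1 = snd \<omega>2" using PiE_ext[OF m(3) m(4)] g by blast
  ultimately show "\<omega>1 = \<omega>2" by (simp add: prod_eq_iff)
qed

lemma fail_card:
  "card {\<omega> \<in> Om T. \<forall>t<T. beta T \<omega> t \<notin> Succ w t} \<le> (\<Prod>t<T. card (Block - Succ w t))"
proof -
  let ?F = "{\<omega> \<in> Om T. \<forall>t<T. beta T \<omega> t \<notin> Succ w t}"
  have "beta T ` ?F \<subseteq> PiE {..<T} (\<lambda>t. Block - Succ w t)"
  proof
    fix y assume "y \<in> beta T ` ?F"
    then obtain \<omega> where o: "\<omega> \<in> ?F" and y: "y = beta T \<omega>" by blast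
    have h: "(\<forall>i\<in>{..<T}. beta T \<omega> i \<in> Block) \<and> beta T \<omega> \<in> extensional {..<T}"
      using beta_in[of \<omega> T] o by (simp add: PiE_iff)
    show "y \<in> PiE {..<T} (\<lambda>t. Block - Succ w t)" using h o y by (simp add: PiE_iff)
  qed
  hence "card (beta T ` ?F) \<le> card (PiE {..<T} (\<lambda>t. Block - Succ w t))"
    using finite_Block by (intro card_mono finite_PiE) auto
  moreover have "card (beta T ` ?F) = card ?F"
    by (rule card_image, rule inj_on_subset[OF inj_beta]) auto
  ultimately show ?thesis by (simp add: card_PiE)
qed

end


context blk begin

lemma succ_output:
  fixes msg :: "nat \<Rightarrow> 'm" and ID L :: "nat \<Rightarrow> nat" and D i k T t :: nat
  assumes injID: "inj_on ID V" and w: "w \<in> V" and wV': "w \<notin> V'" and tT: "t < T"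
    and succ: "beta T \<omega> t \<in> Succ w t"
  shows "\<exists>u\<in>V'. E u w \<and> ctr u = ctr w \<and>
     outputs (Alg k) E V (\<lambda>v. LInput n C D i (ID v) (L v) (ID (ctr v)) (if v \<in> V' then Some (msg v) else None))
       (fst \<omega>) (snd \<omega> \<circ> ctr) T w = Some (msg u)"
proof -
  define inp where "inp = (\<lambda>v. LInput n C D i (ID v) (L v) (ID (ctr v)) (if v \<in> V' then Some (msg v) else None))"
  define acts where "acts s = (\<lambda>u. act (inp u) (fst \<omega> u) ((snd \<omega> \<circ> ctr) u) s)" for s
  define hist where "hist = map (\<lambda>s. heard E V (acts s) w) [0..<T]"
  have out: "outputs (Alg k) E V inp (fst \<omega>) (snd \<omega> \<circ> ctr) T w = outf (inp w) hist"
    by (simp add: outputs_Alg acts_def hist_def)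
  have txiff: "(\<exists>p. acts s u = Transmit p) \<longleftrightarrow> txB s (beta T \<omega> s) u" if "u \<in> V" "s < T" for u s
    using that ctrV[OF that(1)]
    by (simp add: acts_def act_def inp_def beta_def txB_def split: option.splits)
  have txform: "u \<in> V' \<and> p = (Some (msg u), [ID (ctr u)])" if "acts s u = Transmit p" for s u p
    using that by (auto simp: acts_def act_def inp_def split: if_splits option.splits)
  have wl: "acts s w = Listen" for s by (simp add: acts_def act_def inp_def wV')
  have goodel: "\<exists>u\<in>V'. E u w \<and> ctr u = ctr w \<and> x = Some (Some (msg u), [ID (ctr w)])"
    if x: "x \<in> set hist" and g: "isgood (ID (ctr w)) x" for x
  proof -
    obtain s where xs: "x = heard E V (acts s) w" using x by (auto simp: hist_def)
    obtain m where xm: "x = Some (Some m, [ID (ctr w)])" using g by (auto simp: isgood_def)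
    let ?tr = "transmitters E V (acts s) w"
    have c1: "card ?tr = 1" and hx: "x = (case acts s (the_elem ?tr) of Transmit p \<Rightarrow> Some p | _ \<Rightarrow> None)"
      using xs xm by (auto simp: heard_def split: if_splits)
    obtain u where tru: "?tr = {u}" using c1 by (rule card_1_singletonE)
    obtain p where pu: "acts s u = Transmit p" and xp: "x = Some p"
      using hx tru xm by (cases "acts s u") auto
    have uin: "u \<in> V" "E w u" using tru by (auto simp: transmitters_def)
    have uV': "u \<in> V'" and pf: "p = (Some (msg u), [ID (ctr u)])" using txform[OF pu] by auto
    have "ID (ctr u) = ID (ctr w)" using pf xp xm by simp
    hence cu: "ctr u = ctr w" using injID ctrV[OF uin(1)] ctrV[OF w] by (auto dest: inj_onD)
    show ?thesis using uV' Esym[OF uin(2)] cu xp pf by auto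
  qed
  have sgood: "isgood (ID (ctr w)) (hist ! t)"
  proof -
    obtain u where u: "u \<in> S0 w" and tu: "{v \<in> V. E w v \<and> txB t (beta T \<omega> t) v} = {u}"
      using succ by (auto simp: Succ_def)
    have "transmitters E V (acts t) w = {v \<in> V. E w v \<and> txB t (beta T \<omega> t) v}"
      using txiff tT by (auto simp: transmitters_def)
    hence tr: "transmitters E V (acts t) w = {u}" using tu by simp
    have uV: "u \<in> V" using tu by auto
    obtain p where pu: "acts t u = Transmit p"
      using txiff[OF uV tT] tu by auto
    have pf: "p = (Some (msg u), [ID (ctr u)])" using txform[OF pu] by auto
    have cu: "ctr u = ctr w" using u by (simp add: S0_def)
    have "hist ! t = heard E V (acts t) w" using tT by (simp add: hist_def)
    also have "\<dots> = Some p" using tr wl pu by (simp add: heard_def)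
    finally show ?thesis using pf cu by (simp add: isgood_def)
  qed
  have tin: "hist ! t \<in> set hist" using tT by (simp add: hist_def)
  obtain x rest where fl: "filter (isgood (ID (ctr w))) hist = x # rest"
    using sgood tin by (cases "filter (isgood (ID (ctr w))) hist") (auto simp: filter_empty_conv)
  have "x \<in> set (filter (isgood (ID (ctr w))) hist)" using fl by simp
  hence "x \<in> set hist" "isgood (ID (ctr w)) x" by auto
  then obtain u where u: "u \<in> V'" "E u w" "ctr u = ctr w" "x = Some (Some (msg u), [ID (ctr w)])"
    using goodel by blast
  have "outf (inp w) hist = Some (msg u)" using fl u by (simp add: outf_def inp_def)
  thus ?thesis using u out unfolding inp_def by auto
qed

end


lemma exp_nat_ge: "(2::real) ^ m \<le> exp (real m)"
proof -
  have "(2::real) \<le> exp 1" using exp_ge_add_one_self[of 1] by simp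
  hence "(2::real) ^ m \<le> exp 1 ^ m" by (intro power_mono) auto
  also have "\<dots> = exp (real m)" by (simp add: exp_of_nat_mult[symmetric])
  finally show ?thesis .
qed

context blk begin

lemma fail_real:
  assumes w: "w \<in> V" and ne: "S0 w \<noteq> {}" and n2: "2 \<le> n"
  shows "real (card {\<omega> \<in> Om (TT k n C). \<forall>t<TT k n C. beta (TT k n C) \<omega> t \<notin> Succ w t})
     \<le> real (card (Om (TT k n C))) / real n ^ (k + 1)"
proof -
  define T where "T = TT k n C"
  define P where "P = PP k n C"
  define p :: real where "p = 1 / (64 * real C)"
  define cB where "cB = real (card Block)"
  define j0 where "j0 = floor_log (card (S0 w)) + 2"
  define G where "G = {t. t < T \<and> t mod Lv n = j0}"
  have Cpos': "C > 0" using Cpos w by auto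
  have S0V: "S0 w \<subseteq> V" using V'V by (auto simp: S0_def)
  have "card (S0 w) \<le> n" using card_mono[OF finV S0V] cardV by simp
  hence "floor_log (card (S0 w)) \<le> floor_log n" by (rule floor_log_le_iff)
  hence j0L: "j0 < Lv n" by (simp add: j0_def Lv_def)
  have TP: "T = P * Lv n" by (simp add: T_def P_def TT_def)
  have p1: "0 \<le> 1 - p" "1 - p \<le> 1" using Cpos' by (auto simp: p_def field_simps)
  have cB0: "0 \<le> cB" by (simp add: cB_def)
  have GT: "G \<subseteq> {..<T}" by (auto simp: G_def)
  have cardG: "P \<le> card G"
  proof -
    have sub: "(\<lambda>r. r * Lv n + j0) ` {..<P} \<subseteq> G"
    proof
      fix x assume "x \<in> (\<lambda>r. r * Lv n + j0) ` {..<P}"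
      then obtain r where r: "r < P" and x: "x = r * Lv n + j0" by auto
      have "Suc r * Lv n \<le> P * Lv n" using r by (intro mult_le_mono1) simp
      hence "x < T" using x j0L TP by simp
      moreover have "x mod Lv n = j0" using x j0L by simp
      ultimately show "x \<in> G" by (simp add: G_def)
    qed
    have "inj_on (\<lambda>r. r * Lv n + j0) {..<P}" by (rule inj_onI) (simp add: Lv_def)
    hence "card ((\<lambda>r. r * Lv n + j0) ` {..<P}) = P" by (simp add: card_image)
    moreover have "finite G" using GT finite_subset by blast
    ultimately show ?thesis using card_mono[OF \<open>finite G\<close> sub] by linarith
  qed
  have fac: "real (card (Block - Succ w t)) \<le> cB * (if t \<in> G then 1 - p else 1)" for t
  proof (cases "t \<in> G")
    case True
    hence tj: "t mod Lv n = floor_log (card (S0 w)) + 2" by (simp add: G_def j0_def)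
    have sb: "Succ w t \<subseteq> Block" by (auto simp: Succ_def)
    have "real (card (Block - Succ w t)) = cB - real (card (Succ w t))"
      using card_Diff_subset[OF finite_subset[OF sb finite_Block] sb] card_mono[OF finite_Block sb]
      by (simp add: cB_def of_nat_diff)
    also have "\<dots> \<le> cB - cB / (64 * C)" using Succ_card[OF w ne tj] by (simp add: cB_def)
    also have "\<dots> = cB * (1 - p)" by (simp add: p_def field_simps)
    finally show ?thesis using True by simp
  next
    case False
    have "card (Block - Succ w t) \<le> card Block" using finite_Block by (intro card_mono) auto
    thus ?thesis using False by (simp add: cB_def)
  qed
  have "real (card {\<omega> \<in> Om T. \<forall>t<T. beta T \<omega> t \<notin> Succ w t}) \<le> (\<Prod>t<T. real (card (Block - Succ w t)))"
  proof -
    have "real (card {\<omega> \<in> Om T. \<forall>t<T. beta T \<omega> t \<notin> Succ w t}) \<le> real (\<Prod>t<T. card (Block - Succ w t))"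
      using fail_card[of T w] by (simp only: of_nat_le_iff)
    also have "\<dots> = (\<Prod>t<T. real (card (Block - Succ w t)))" by (rule of_nat_prod)
    finally show ?thesis .
  qed
  also have "\<dots> \<le> (\<Prod>t<T. cB * (if t \<in> G then 1 - p else 1))"
    by (intro prod_mono) (use fac in auto)
  also have "\<dots> = cB ^ T * (\<Prod>t<T. if t \<in> G then 1 - p else 1)"
    by (simp add: prod.distrib)
  also have "(\<Prod>t<T. if t \<in> G then 1 - p else 1) = (1 - p) ^ card G"
    using prod_if_const[OF finite_lessThan GT] .
  also have "(1 - p) ^ card G \<le> (1 - p) ^ P" using p1 cardG by (intro power_decreasing) auto
  also have "(1 - p) ^ P \<le> exp (- p) ^ P"
    using p1 exp_ge_add_one_self[of "- p"] by (intro power_mono) auto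
  also have "exp (- p) ^ P = exp (- real ((k + 1) * (floor_log n + 1)))"
  proof -
    have "real P * (- p) = - real ((k + 1) * (floor_log n + 1))"
      using Cpos' by (simp add: P_def PP_def p_def field_simps)
    have "exp (- p) ^ P = exp (real P * (- p))" by (rule exp_of_nat_mult[symmetric])
    thus ?thesis using \<open>real P * (- p) = _\<close> by simp
  qed
  also have "\<dots> \<le> 1 / real n ^ (k + 1)"
  proof -
    have npos: "0 < n" using n2 by simp
    have "real n \<le> 2 ^ (floor_log n + 1)"
      using of_nat_le_iff[where 'a=real, THEN iffD2, OF floor_log_exp2_ge[of n]] by simp
    also have "\<dots> \<le> exp (real (floor_log n + 1))" by (rule exp_nat_ge)
    finally have "real n ^ (k + 1) \<le> exp (real (floor_log n + 1)) ^ (k + 1)"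
      by (intro power_mono) auto
    also have "\<dots> = exp (real (k + 1) * real (floor_log n + 1))"
      by (rule exp_of_nat_mult[symmetric])
    also have "\<dots> = exp (real ((k + 1) * (floor_log n + 1)))"
      by (simp only: of_nat_mult)
    finally have le: "real n ^ (k + 1) \<le> exp (real ((k + 1) * (floor_log n + 1)))" .
    have "exp (- real ((k + 1) * (floor_log n + 1))) = 1 / exp (real ((k + 1) * (floor_log n + 1)))"
      by (simp only: exp_minus inverse_eq_divide)
    also have "\<dots> \<le> 1 / real n ^ (k + 1)"
      using le npos by (intro divide_left_mono) auto
    finally show ?thesis .
  qed
  finally have "real (card {\<omega> \<in> Om T. \<forall>t<T. beta T \<omega> t \<notin> Succ w t}) \<le> cB ^ T * (1 / real n ^ (k + 1))"
    using cB0 by (simp add: mult_left_mono)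
  moreover have "real (card (Om T)) = cB ^ T" by (simp add: card_Om cB_def)
  ultimately show ?thesis by (simp add: T_def)
qed

end


lemma ptime_Alg: "ptime (Alg k) (n, C, D, i) = TT k n C" by (simp add: Alg_def)
lemma prand_Alg: "prand (Alg k) (n, C, D, i) = TT k n C * bb n C" by (simp add: Alg_def)

lemma time_bound:
  assumes n2: "2 \<le> n"
  shows "real (TT k n C) \<le> 512 * (real k + 1) * real C * (log 2 (real n)) ^ 3"
proof -
  define l where "l = real (floor_log n)"
  define M where "M = log 2 (real n)"
  have "floor_log n = Suc (floor_log (n div 2))" using n2 by (rule floor_log_rec)
  hence l1: "1 \<le> l" by (simp add: l_def)
  have "2 ^ floor_log n \<le> n" using n2 by (intro floor_log_exp2_le) simp
  hence "(2::real) ^ floor_log n \<le> real n" using of_nat_le_iff[where 'a=real, THEN iffD2] by fastforce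
  hence "log 2 ((2::real) ^ floor_log n) \<le> log 2 (real n)" using n2 by (subst log_le_cancel_iff) auto
  hence lM: "l \<le> M" by (simp add: l_def M_def)
  have a: "l + 1 \<le> 2 * M" and b: "l + 3 \<le> 4 * M" using l1 lM by auto
  have "(l + 1) * (l + 3) \<le> (2 * M) * (4 * M)" using a b l1 by (intro mult_mono) auto
  also have "\<dots> = 8 * (M * M)" by simp
  also have "\<dots> \<le> 8 * (M * M * M)"
  proof -
    have M1: "1 \<le> M" using l1 lM by simp
    have "M * M * 1 \<le> M * M * M" using M1 by (intro mult_left_mono) auto
    thus ?thesis by simp
  qed
  finally have key: "(l + 1) * (l + 3) \<le> 8 * (M * M * M)" .
  have "real (TT k n C) = 64 * real C * (real k + 1) * ((l + 1) * (l + 3))"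
    by (simp add: TT_def PP_def Lv_def l_def algebra_simps)
  also have "\<dots> \<le> 64 * real C * (real k + 1) * (8 * (M * M * M))"
    using key by (intro mult_left_mono) auto
  also have "\<dots> = 512 * (real k + 1) * real C * M ^ 3" by (simp add: power3_eq_cube algebra_simps)
  finally show ?thesis by (simp add: M_def)
qed

lemma main:
  fixes msg :: "nat \<Rightarrow> 'm" and d :: direction
  assumes ci: "cluster_instance n a C D E V ID L ctr" and n2: "2 \<le> n"
    and V'sub: "V' \<subseteq> {v \<in> V. L v = i}"
  shows "measure_pmf.prob (pmf_of_set ((PiE V (\<lambda>_. {bs::bool list. length bs = TT k n C * bb n C})) \<times>
             (PiE V (\<lambda>_. {bs::bool list. length bs = TT k n C * bb n C}))))
         {(pr, sh). task_ok d i E V L ctr V' msg (outputs (Alg k) E V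
              (\<lambda>v. LInput n C D i (ID v) (L v) (ID (ctr v)) (if v \<in> V' then Some (msg v) else None))
              pr (sh \<circ> ctr) (TT k n C)) \<and>
            (\<forall>v\<in>V. real (energy (Alg k) E V
              (\<lambda>v. LInput n C D i (ID v) (L v) (ID (ctr v)) (if v \<in> V' then Some (msg v) else None))
              pr (sh \<circ> ctr) (TT k n C) v) \<le> 512 * (real k + 1) * real C * (log 2 (real n)) ^ 3)}
         \<ge> 1 - 1 / real n ^ k"
proof -
  from ci have finV: "finite V" and cardV: "card V = n"
    and Ein: "\<And>u v. E u v \<Longrightarrow> u \<in> V \<and> v \<in> V" and Esym: "\<And>u v. E u v \<Longrightarrow> E v u"
    and injID: "inj_on ID V" and ctrV: "\<And>v. v \<in> V \<Longrightarrow> ctr v \<in> V"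
    and Cb: "\<And>u. u \<in> V \<Longrightarrow> card (ctr ` ({u} \<union> {v. E u v})) \<le> C"
    unfolding cluster_instance_def by auto
  have V'V: "V' \<subseteq> V" using V'sub by auto
  interpret blk n C E V V' ctr
    using finV cardV Ein Esym ctrV Cb V'V by unfold_locales auto
  define T where "T = TT k n C"
  define inp where "inp = (\<lambda>v. LInput n C D i (ID v) (L v) (ID (ctr v)) (if v \<in> V' then Some (msg v) else None))"
  define Good where "Good = {(pr, sh). task_ok d i E V L ctr V' msg (outputs (Alg k) E V inp pr (sh \<circ> ctr) T) \<and>
            (\<forall>v\<in>V. real (energy (Alg k) E V inp pr (sh \<circ> ctr) T v) \<le> 512 * (real k + 1) * real C * (log 2 (real n)) ^ 3)}"
  have Omeq: "(PiE V (\<lambda>_. {bs::bool list. length bs = TT k n C * bb n C})) \<times>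
             (PiE V (\<lambda>_. {bs::bool list. length bs = TT k n C * bb n C})) = Om T"
    by (simp add: Om_def Lb_def T_def)
  define W where "W = {w \<in> V. is_target d i (L w) \<and> S0 w \<noteq> {}}"
  define F where "F w = {\<omega> \<in> Om T. \<forall>t<T. beta T \<omega> t \<notin> Succ w t}" for w
  have cover: "Om T - Good \<subseteq> (\<Union>w\<in>W. F w)"
  proof
    fix \<omega> assume om: "\<omega> \<in> Om T - Good"
    show "\<omega> \<in> (\<Union>w\<in>W. F w)"
    proof (rule ccontr)
      assume nF: "\<omega> \<notin> (\<Union>w\<in>W. F w)"
      obtain pr sh where prsh: "\<omega> = (pr, sh)" by (cases \<omega>)
      have tok: "task_ok d i E V L ctr V' msg (outputs (Alg k) E V inp pr (sh \<circ> ctr) T)"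
        unfolding task_ok_def
      proof (intro ballI impI)
        fix w assume w: "w \<in> V" and tw: "is_target d i (L w) \<and> (\<exists>u\<in>V'. E u w \<and> ctr u = ctr w)"
        have "S0 w \<noteq> {}" using tw by (auto simp: S0_def)
        hence wW: "w \<in> W" using w tw by (simp add: W_def)
        then obtain t where tT: "t < T" and sc: "beta T \<omega> t \<in> Succ w t"
          using nF om by (auto simp: F_def)
        have "L w \<noteq> i" using tw by (cases d) (auto simp: is_target_def)
        hence wV': "w \<notin> V'" using V'sub by auto
        have "\<exists>u\<in>V'. E u w \<and> ctr u = ctr w \<and>
           outputs (Alg k) E V inp (fst \<omega>) (snd \<omega> \<circ> ctr) T w = Some (msg u)"
          unfolding inp_def by (rule succ_output[OF injID w wV' tT sc])
        thus "\<exists>u\<in>V'. E u w \<and> ctr u = ctr w \<and> outputs (Alg k) E V inp pr (sh \<circ> ctr) T w = Some (msg u)"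
          using prsh by simp
      qed
      have en: "\<forall>v\<in>V. real (energy (Alg k) E V inp pr (sh \<circ> ctr) T v) \<le> 512 * (real k + 1) * real C * (log 2 (real n)) ^ 3"
      proof
        fix v assume "v \<in> V"
        have "real (energy (Alg k) E V inp pr (sh \<circ> ctr) T v) \<le> real T"
          using energy_le by simp
        also have "\<dots> \<le> 512 * (real k + 1) * real C * (log 2 (real n)) ^ 3"
          unfolding T_def by (rule time_bound[OF n2])
        finally show "real (energy (Alg k) E V inp pr (sh \<circ> ctr) T v) \<le> 512 * (real k + 1) * real C * (log 2 (real n)) ^ 3" .
      qed
      have "\<omega> \<in> Good" using tok en prsh by (simp add: Good_def)
      thus False using om by simp
    qed
  qed
  have finW: "finite W" using finV by (simp add: W_def)
  have cardW: "card W \<le> n" using card_mono[OF finV] cardV by (auto simp: W_def)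
  have npos: "0 < real n" using n2 by simp
  have bad: "real (card (Om T - Good)) \<le> real (card (Om T)) / real n ^ k"
  proof -
    have "card (Om T - Good) \<le> card (\<Union>w\<in>W. F w)"
      using cover finW by (intro card_mono) (auto simp: F_def finite_Om)
    also have "\<dots> \<le> (\<Sum>w\<in>W. card (F w))" using finW by (rule card_UN_le)
    finally have "real (card (Om T - Good)) \<le> (\<Sum>w\<in>W. real (card (F w)))"
      by (metis of_nat_le_iff of_nat_sum)
    also have "\<dots> \<le> (\<Sum>w\<in>W. real (card (Om T)) / real n ^ (k + 1))"
    proof (rule sum_mono)
      fix w assume "w \<in> W"
      hence "w \<in> V" "S0 w \<noteq> {}" by (auto simp: W_def)
      thus "real (card (F w)) \<le> real (card (Om T)) / real n ^ (k + 1)"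
        unfolding F_def T_def by (rule fail_real[OF _ _ n2])
    qed
    also have "\<dots> = real (card W) * (real (card (Om T)) / real n ^ (k + 1))" by simp
    also have "\<dots> \<le> real n * (real (card (Om T)) / real n ^ (k + 1))"
      using cardW by (intro mult_right_mono) auto
    also have "\<dots> = real (card (Om T)) / real n ^ k" using npos by (simp add: field_simps)
    finally show ?thesis .
  qed
  have ne: "Om T \<noteq> {}"
  proof -
    have "((\<lambda>_\<in>V. replicate (T * b) False), (\<lambda>_\<in>V. replicate (T * b) False)) \<in> Om T"
      by (simp add: Om_def Lb_def)
    thus ?thesis by auto
  qed
  have cpos: "0 < real (card (Om T))" using ne finite_Om by (simp add: card_gt_0_iff)
  have split: "card (Om T) = card (Om T \<inter> Good) + card (Om T - Good)"
    using finite_Om by (rule card_Int_Diff)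
  have "measure_pmf.prob (pmf_of_set (Om T)) Good = real (card (Om T \<inter> Good)) / real (card (Om T))"
    by (rule measure_pmf_of_set[OF ne finite_Om])
  also have "\<dots> = (real (card (Om T)) - real (card (Om T - Good))) / real (card (Om T))"
    using split by simp
  also have "\<dots> \<ge> (real (card (Om T)) - real (card (Om T)) / real n ^ k) / real (card (Om T))"
    using bad cpos by (intro divide_right_mono) auto
  also have "(real (card (Om T)) - real (card (Om T)) / real n ^ k) / real (card (Om T)) = 1 - 1 / real n ^ k"
    using cpos by (simp add: field_simps)
  finally have "measure_pmf.prob (pmf_of_set (Om T)) Good \<ge> 1 - 1 / real n ^ k" .
  thus ?thesis unfolding Omeq by (simp add: Good_def inp_def T_def)
qed

theorem lemma9:
  fixes d :: direction
  shows "\<forall>(a::nat) (k::nat). \<exists>(A::('m, 'm option \<times> nat list) protocol) (c::real). c > 0 \<and>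
    (\<forall>n C D i E V ID L ctr V' (msg::nat \<Rightarrow> 'm).
       cluster_instance n a C D E V ID L ctr \<and> 2 \<le> n \<and> V' \<subseteq> {v \<in> V. L v = i} \<and>
       (d = Upward \<longrightarrow> 0 < i) \<longrightarrow>
       (let T = ptime A (n, C, D, i); R = prand A (n, C, D, i);
            inp = (\<lambda>v. LInput n C D i (ID v) (L v) (ID (ctr v))
                         (if v \<in> V' then Some (msg v) else None));
            \<Omega> = (PiE V (\<lambda>_. {bs::bool list. length bs = R})) \<times> (PiE V (\<lambda>_. {bs::bool list. length bs = R}))
        in real T \<le> c * real C * (log 2 (real n)) ^ 3 \<and>
           measure_pmf.prob (pmf_of_set \<Omega>)
             {(pr, sh). task_ok d i E V L ctr V' msg (outputs A E V inp pr (sh \<circ> ctr) T) \<and>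
                        (\<forall>v\<in>V. real (energy A E V inp pr (sh \<circ> ctr) T v) \<le> c * real C * (log 2 (real n)) ^ 3)}
             \<ge> 1 - 1 / real n ^ k))"
proof (intro allI)
  fix a k :: nat
  show "\<exists>(A::('m, 'm option \<times> nat list) protocol) (c::real). c > 0 \<and>
    (\<forall>n C D i E V ID L ctr V' (msg::nat \<Rightarrow> 'm).
       cluster_instance n a C D E V ID L ctr \<and> 2 \<le> n \<and> V' \<subseteq> {v \<in> V. L v = i} \<and>
       (d = Upward \<longrightarrow> 0 < i) \<longrightarrow>
       (let T = ptime A (n, C, D, i); R = prand A (n, C, D, i);
            inp = (\<lambda>v. LInput n C D i (ID v) (L v) (ID (ctr v))
                         (if v \<in> V' then Some (msg v) else None));
            \<Omega> = (PiE V (\<lambda>_. {bs::bool list. length bs = R})) \<times> (PiE V (\<lambda>_. {bs::bool list. length bs = R}))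
        in real T \<le> c * real C * (log 2 (real n)) ^ 3 \<and>
           measure_pmf.prob (pmf_of_set \<Omega>)
             {(pr, sh). task_ok d i E V L ctr V' msg (outputs A E V inp pr (sh \<circ> ctr) T) \<and>
                        (\<forall>v\<in>V. real (energy A E V inp pr (sh \<circ> ctr) T v) \<le> c * real C * (log 2 (real n)) ^ 3)}
             \<ge> 1 - 1 / real n ^ k))"
  proof (intro exI[of _ "Alg k"] exI[of _ "512 * (real k + 1)"] conjI allI impI)
    show "(0::real) < 512 * (real k + 1)" by simp
  next
    fix n C D i E V ID L ctr V' and msg :: "nat \<Rightarrow> 'm"
    assume H: "cluster_instance n a C D E V ID L ctr \<and> 2 \<le> n \<and> V' \<subseteq> {v \<in> V. L v = i} \<and>
       (d = Upward \<longrightarrow> 0 < i)"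
    show "let T = ptime (Alg k) (n, C, D, i); R = prand (Alg k) (n, C, D, i);
            inp = (\<lambda>v. LInput n C D i (ID v) (L v) (ID (ctr v))
                         (if v \<in> V' then Some (msg v) else None));
            \<Omega> = (PiE V (\<lambda>_. {bs::bool list. length bs = R})) \<times> (PiE V (\<lambda>_. {bs::bool list. length bs = R}))
        in real T \<le> 512 * (real k + 1) * real C * (log 2 (real n)) ^ 3 \<and>
           measure_pmf.prob (pmf_of_set \<Omega>)
             {(pr, sh). task_ok d i E V L ctr V' msg (outputs (Alg k) E V inp pr (sh \<circ> ctr) T) \<and>
                        (\<forall>v\<in>V. real (energy (Alg k) E V inp pr (sh \<circ> ctr) T v) \<le> 512 * (real k + 1) * real C * (log 2 (real n)) ^ 3)}
             \<ge> 1 - 1 / real n ^ k"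
      unfolding Let_def ptime_Alg prand_Alg
      using time_bound[of n k C] main[of n a C D E V ID L ctr V' i k d msg] H by blast
  qed
qed


end
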